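(* Let $v$ be the current view of a server $s$, i.e., $s.cview=v$. If server $s$ installs view $v.succ$, then at least a weighted majority (for view $v$) of servers, including $s$, had uninstalled view $v$.
   Context: Servers $S=\{s_1,\dots,s_n\}$ in an asynchronous crash-prone message-passing system with reliable links. Views form a sequence $v_0,v_1,\dots$ with $v_{k+1}=v_k.succ$. Each server has a current view $s.cview$ (initially $v_0$) and a weight in each view. A weighted majority for view $v$ is a set of servers whose weights in $v$ sum to more than $n/2$. View changer run by each server $s$ with $s.cview=v$: when a local timeout for $v$ expires it sends $\langle\text{change\_view},v.succ\rangle$ to all servers; once it has received or sent change\_view for $v.succ$ it forwards it if not already sent, disables read/write operations, sends $\langle\text{state\_update},(val,ts,cid),v,w\rangle$ to all servers (its register state and its weight $w$ in $v$) — at this point it has uninstalled $v$ — waits until it has state\_update messages for view $v$ whose weights sum to more than $n/2$, adopts the register value with lexicographically largest $(ts,cid)$ among them, and then sets $s.cview\leftarrow v.succ$ (installs $v.succ$) and re-enables read/write operations. *)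

theory Defs
  imports Complex_Main
begin

(* Servers: elements of a finite type 's; n = card (UNIV :: 's set).
   Views: v_k is represented by the natural number k, so v.succ = Suc v.
   Register state: (val, ts, cid) :: 'v \<times> nat \<times> 'c.
   Weights: wt s v is the weight of server s in view v. *)

datatype ('v, 'c) msg =
    ChangeView nat
  | StateUpdate "'v \<times> nat \<times> 'c" nat real   (* register state, view, weight *)

record ('s, 'v, 'c) lstate =
  cview      :: nat
  reg        :: "'v \<times> nat \<times> 'c"
  rw_enabled :: bool
  cv_sent    :: "nat set"          (* views w for which change_view w was sent *)
  uninst     :: "nat set"          (* views v that were uninstalled (state_update for v sent) *)
  crashed    :: bool
  inbox      :: "('s \<times> ('v, 'c) msg) set"   (* received messages, with sender *)

record ('s, 'v, 'c) gstate =
  loc :: "'s \<Rightarrow> ('s, 'v, 'c) lstate"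
  net :: "('s \<times> 's \<times> ('v, 'c) msg) set"   (* sent messages: (sender, receiver, msg) *)

definition wmajority :: "('s::finite \<Rightarrow> nat \<Rightarrow> real) \<Rightarrow> nat \<Rightarrow> 's set \<Rightarrow> bool" where
  "wmajority wt v Q \<longleftrightarrow> (\<Sum>q\<in>Q. wt q v) > real (card (UNIV :: 's set)) / 2"

definition broadcast :: "'s \<Rightarrow> ('v, 'c) msg \<Rightarrow> ('s \<times> 's \<times> ('v, 'c) msg) set" where
  "broadcast s m = {(s, q, m) | q. True}"

fun msg_weight :: "('v, 'c) msg \<Rightarrow> real" where
  "msg_weight (StateUpdate r v w) = w"
| "msg_weight (ChangeView _) = 0"

definition lex_le :: "nat \<times> 'c::linorder \<Rightarrow> nat \<times> 'c \<Rightarrow> bool" where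
  "lex_le a b \<longleftrightarrow> fst a < fst b \<or> (fst a = fst b \<and> snd a \<le> snd b)"

definition init_state :: "'v \<times> nat \<times> 'c \<Rightarrow> ('s, 'v, 'c) gstate" where
  "init_state r0 = \<lparr> loc = (\<lambda>s. \<lparr> cview = 0, reg = r0, rw_enabled = True, cv_sent = {},
                                    uninst = {}, crashed = False, inbox = {} \<rparr>),
                      net = {} \<rparr>"

inductive step :: "('s::finite \<Rightarrow> nat \<Rightarrow> real)
                   \<Rightarrow> ('s, 'v, 'c::linorder) gstate \<Rightarrow> ('s, 'v, 'c) gstate \<Rightarrow> bool"
  for wt where
  (* reliable asynchronous links: a sent message may be delivered at any time *)
  deliver: "\<lbrakk> (p, s, m) \<in> net g; \<not> crashed (loc g s) \<rbrakk> \<Longrightarrow>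
     step wt g (g\<lparr> loc := (loc g)(s := loc g s\<lparr> inbox := insert (p, m) (inbox (loc g s)) \<rparr>) \<rparr>)"
  (* the local timeout for the current view v expires *)
| timeout: "\<lbrakk> \<not> crashed (loc g s); cview (loc g s) = v; Suc v \<notin> cv_sent (loc g s) \<rbrakk> \<Longrightarrow>
     step wt g \<lparr> loc = (loc g)(s := loc g s\<lparr> cv_sent := insert (Suc v) (cv_sent (loc g s)) \<rparr>),
                 net = net g \<union> broadcast s (ChangeView (Suc v)) \<rparr>"
  (* once change_view v.succ has been received or sent: forward it if not yet sent,
     disable read/write operations, send state_update; this uninstalls v *)
| uninstall: "\<lbrakk> \<not> crashed (loc g s); cview (loc g s) = v; v \<notin> uninst (loc g s);
                Suc v \<in> cv_sent (loc g s) \<or> (\<exists>p. (p, ChangeView (Suc v)) \<in> inbox (loc g s)) \<rbrakk> \<Longrightarrow>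
     step wt g \<lparr> loc = (loc g)(s := loc g s\<lparr> cv_sent := insert (Suc v) (cv_sent (loc g s)),
                                               rw_enabled := False,
                                               uninst := insert v (uninst (loc g s)) \<rparr>),
                 net = net g
                       \<union> (if Suc v \<in> cv_sent (loc g s) then {} else broadcast s (ChangeView (Suc v)))
                       \<union> broadcast s (StateUpdate (reg (loc g s)) v (wt s v)) \<rparr>"
  (* having state_update messages for v whose weights sum to more than n/2,
     adopt the register value with lexicographically largest (ts, cid) and install v.succ *)
| install: "\<lbrakk> \<not> crashed (loc g s); cview (loc g s) = v; v \<in> uninst (loc g s);
              M \<subseteq> inbox (loc g s); finite M;
              \<forall>(p, m) \<in> M. \<exists>r w. m = StateUpdate r v w;
              (\<Sum>(p, m)\<in>M. msg_weight m) > real (card (UNIV :: 's set)) / 2;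
              (p0, StateUpdate r v w0) \<in> M;
              \<forall>(p, m) \<in> M. \<forall>r' w'. m = StateUpdate r' v w' \<longrightarrow> lex_le (snd r') (snd r) \<rbrakk> \<Longrightarrow>
     step wt g (g\<lparr> loc := (loc g)(s := loc g s\<lparr> reg := r, cview := Suc v, rw_enabled := True \<rparr>) \<rparr>)"
  (* read/write operations (only while enabled) may change the register state *)
| operation: "\<lbrakk> \<not> crashed (loc g s); rw_enabled (loc g s) \<rbrakk> \<Longrightarrow>
     step wt g (g\<lparr> loc := (loc g)(s := loc g s\<lparr> reg := r' \<rparr>) \<rparr>)"
| crash: "step wt g (g\<lparr> loc := (loc g)(s := loc g s\<lparr> crashed := True \<rparr>) \<rparr>)"

definition reachable :: "('s::finite \<Rightarrow> nat \<Rightarrow> real) \<Rightarrow> 'v \<times> nat \<times> 'c::linorder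
                         \<Rightarrow> ('s, 'v, 'c) gstate \<Rightarrow> bool" where
  "reachable wt r0 g \<longleftrightarrow> (step wt)\<^sup>*\<^sup>* (init_state r0) g"

end

theory Submission
  imports Defs
begin

definition inv :: "('s::finite \<Rightarrow> nat \<Rightarrow> real) \<Rightarrow> ('s, 'v, 'c) gstate \<Rightarrow> bool" where
  "inv wt g \<longleftrightarrow>
    (\<forall>p q r v w. (p,q,StateUpdate r v w) \<in> net g \<longrightarrow> v \<in> uninst (loc g p) \<and> w = wt p v \<and>
        (\<forall>q' r' w'. (p,q',StateUpdate r' v w') \<in> net g \<longrightarrow> r' = r)) \<and>
    (\<forall>s p m. (p,m) \<in> inbox (loc g s) \<longrightarrow> (p,s,m) \<in> net g)"

lemma inv_init: "inv wt (init_state r0)"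
  by (simp add: inv_def init_state_def)

lemma inv_step:
  assumes "step wt g g'" "inv wt g"
  shows "inv wt g'"
  using assms
proof (induction rule: step.induct)
  case (deliver p s m g)
  then show ?case by (auto simp: inv_def)
next
  case (timeout g s v)
  then show ?case by (auto simp: inv_def broadcast_def)
next
  case (uninstall g s v)
  then show ?case
    apply (simp add: inv_def broadcast_def split: if_splits)
    apply (intro conjI allI impI; elim disjE conjE; (simp; fail)?)
    by (metis)+
next
  case (install g s v M p0 r w0)
  then show ?case by (auto simp: inv_def)
next
  case (operation g s r')
  then show ?case by (auto simp: inv_def)
next
  case (crash g s)
  then show ?case by (auto simp: inv_def)
qed

lemma inv_reach: "reachable wt r0 g \<Longrightarrow> inv wt g"
  unfolding reachable_def
  by (induction rule: rtranclp_induct) (auto simp: inv_init inv_step)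

theorem lemma1:
  fixes wt :: "'s::finite \<Rightarrow> nat \<Rightarrow> real"
    and r0 :: "'v \<times> nat \<times> 'c::linorder"
    and g g' :: "('s, 'v, 'c) gstate"
  assumes "reachable wt r0 g"
    and "step wt g g'"
    and "cview (loc g s) = v"
    and "cview (loc g' s) = Suc v"
  shows "s \<in> {q. v \<in> uninst (loc g q)}
         \<and> (\<exists>Q \<subseteq> {q. v \<in> uninst (loc g q)}. wmajority wt v Q)"
proof -
  have I: "inv wt g" using assms(1) by (rule inv_reach)
  from assms(2,3,4) show ?thesis
  proof (cases rule: step.cases)
    case (install s1 v1 M p0 r w0)
    have ss: "s1 = s" using install assms(3,4) by (auto split: if_splits)
    have vv: "v1 = v" using install assms(3) ss by simp
    have Msub: "M \<subseteq> inbox (loc g s)" and fin: "finite M" using install ss by auto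
    have Mform: "\<forall>(p, m) \<in> M. \<exists>r w. m = StateUpdate r v w" using install vv by simp
    have sumM: "(\<Sum>(p, m)\<in>M. msg_weight m) > real (card (UNIV :: 's set)) / 2"
      using install by simp
    have props: "\<And>p m. (p,m) \<in> M \<Longrightarrow> \<exists>r. m = StateUpdate r v (wt p v) \<and> v \<in> uninst (loc g p)
         \<and> (\<forall>q' r' w'. (p,q',StateUpdate r' v w') \<in> net g \<longrightarrow> r' = r)"
    proof -
      fix p m assume pm: "(p,m) \<in> M"
      then obtain r w where m: "m = StateUpdate r v w" using Mform by blast
      have "(p,s,m) \<in> net g" using I Msub pm unfolding inv_def by blast
      then show "?thesis p m" using I m unfolding inv_def by blast
    qed
    have injM: "inj_on fst M"
    proof (rule inj_onI)
      fix x y assume x: "x \<in> M" and y: "y \<in> M" and e: "fst x = fst y"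
      obtain p m where xp: "x = (p,m)" by (cases x)
      obtain p' m' where yp: "y = (p',m')" by (cases y)
      have pp: "p' = p" using e xp yp by simp
      obtain r where r: "m = StateUpdate r v (wt p v)" using props x xp by blast
      obtain r' where r': "m' = StateUpdate r' v (wt p v)"
        and "\<forall>q' r'' w'. (p,q',StateUpdate r'' v w') \<in> net g \<longrightarrow> r'' = r'"
        using props y yp pp by blast
      moreover have "(p,s,m) \<in> net g" using I Msub x xp unfolding inv_def by blast
      ultimately have "r = r'" using r by blast
      then show "x = y" using xp yp pp r r' by simp
    qed
    have "(\<Sum>(p, m)\<in>M. msg_weight m) = (\<Sum>x\<in>M. wt (fst x) v)"
    proof (rule sum.cong)
      fix x assume "x \<in> M"
      then show "(case x of (p, m) \<Rightarrow> msg_weight m) = wt (fst x) v"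
        using props by (cases x) fastforce
    qed simp
    also have "\<dots> = (\<Sum>q\<in>fst ` M. wt q v)" using sum.reindex[OF injM, of "\<lambda>q. wt q v"] by simp
    finally have maj: "wmajority wt v (fst ` M)" using sumM unfolding wmajority_def by simp
    have "fst ` M \<subseteq> {q. v \<in> uninst (loc g q)}" using props by force
    moreover have "v \<in> uninst (loc g s)" using install ss vv by simp
    ultimately show ?thesis using maj by blast
  qed (auto split: if_splits)
qed
end
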